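(* Let $P<N$ and let $\phi_1,\dots,\phi_N\in\mathbb R^{P\times N}$ be random matrices whose entries are i.i.d. Gaussian with mean $0$ and variance $1/P$. Then with probability one every $\phi_q$ is full-spark. Consequently, for any network dynamical system $\mathcal G=(G,f,h)$ of size $N$ satisfying Assumptions 1 and 2 with $P>2\Delta(G)+1$, almost surely the following holds: for every $q\in[N]$, with $y^q(1)=\phi_q x^q(1)$ where $x^q(1)$ is the time-1 state from a $q$-pinching initial condition, the problem $\min\|\tilde x\|_0$ subject to $\phi_q\tilde x=y^q(1)$ has the unique solution $x^q(1)$, and $\operatorname{supp}(x^q(1))\setminus\{q\}=L_1(q)$.
   Context: Let $G$ be a directed graph on vertex set $[N]=\{1,\dots,N\}$ without self-loops, with adjacency matrix $A\in\{0,1\}^{N\times N}$, where $A_{ij}=1$ if and only if $i$ receives an edge (input) from $j$; in particular $A_{ii}=0$. The out-degree of $q\in[N]$ is $d_q=\#\{i: A_{iq}=1\}$, the maximum out-degree is $\Delta(G)=\max_{q}d_q$, and the first-level set of $q$ is $L_1(q)=\{i\in[N]: A_{iq}=1\}$. The network dynamical system $\mathcal G=(G,f,h)$ is the discrete-time system $x_i(t+1)=f_i(x_i(t))+\sum_{j=1}^N A_{ij}h_{ij}(x_i(t),x_j(t))$ for $i\in[N]$, $t=0,1,2,\dots$, where $f_i:\mathbb R\to\mathbb R$ and $h_{ij}:\mathbb R\times\mathbb R\to\mathbb R$; the state vector is $x(t)=(x_1(t),\dots,x_N(t))^T$. Assumption 1: $f_i(0)=0$ for all $i\in[N]$. Assumption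 2: there is $\delta>0$ such that for all $i,j\in[N]$, $h_{ij}(0,0)=0$ and $h_{ij}(0,v)\neq 0$ for every $v$ with $0<|v|<\delta$. For $q\in[N]$, a $q$-pinching initial condition is $x^q(0)$ with $x^q_i(0)=\epsilon_q\delta_{iq}$ (Kronecker delta), where $0<|\epsilon_q|<\delta$; $x^q(t)$ denotes the resulting trajectory. For $x\in\mathbb R^N$, $\operatorname{supp}(x)=\{i: x_i\neq0\}$ and $\|x\|_0=\#\operatorname{supp}(x)$. The spark of $\phi\in\mathbb R^{P\times N}$ ($P<N$) is $\min\{\|x\|_0: \phi x=0,\ x\neq 0\}$; $\phi$ is full-spark if its spark equals $P+1$. *)

theory Defs
  imports "HOL-Probability.Probability"
begin

(* Vertices / columns are indexed by {..<N} (0-based version of [N]); rows by {..<P}.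
   A P x N matrix is a function nat => nat => real (row, column). *)

definition is_vec :: "nat \<Rightarrow> (nat \<Rightarrow> real) \<Rightarrow> bool" where
  "is_vec N x \<longleftrightarrow> (\<forall>j. N \<le> j \<longrightarrow> x j = 0)"

definition mat_vec :: "nat \<Rightarrow> nat \<Rightarrow> (nat \<Rightarrow> nat \<Rightarrow> real) \<Rightarrow> (nat \<Rightarrow> real) \<Rightarrow> (nat \<Rightarrow> real)" where
  "mat_vec P N phi x = (\<lambda>i. if i < P then (\<Sum>j<N. phi i j * x j) else 0)"

definition supp :: "nat \<Rightarrow> (nat \<Rightarrow> real) \<Rightarrow> nat set" where
  "supp N x = {j. j < N \<and> x j \<noteq> 0}"

definition l0norm :: "nat \<Rightarrow> (nat \<Rightarrow> real) \<Rightarrow> nat" where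
  "l0norm N x = card (supp N x)"

definition spark :: "nat \<Rightarrow> nat \<Rightarrow> (nat \<Rightarrow> nat \<Rightarrow> real) \<Rightarrow> nat" where
  "spark P N phi = Inf {l0norm N x | x. is_vec N x \<and> x \<noteq> (\<lambda>_. 0) \<and> mat_vec P N phi x = (\<lambda>_. 0)}"

definition full_spark :: "nat \<Rightarrow> nat \<Rightarrow> (nat \<Rightarrow> nat \<Rightarrow> real) \<Rightarrow> bool" where
  "full_spark P N phi \<longleftrightarrow> spark P N phi = P + 1"

definition l0_unique_solution :: "nat \<Rightarrow> nat \<Rightarrow> (nat \<Rightarrow> nat \<Rightarrow> real) \<Rightarrow> (nat \<Rightarrow> real) \<Rightarrow> (nat \<Rightarrow> real) \<Rightarrow> bool" where
  "l0_unique_solution P N phi y x \<longleftrightarrow>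
     is_vec N x \<and> mat_vec P N phi x = y \<and>
     (\<forall>z. is_vec N z \<and> mat_vec P N phi z = y \<and> z \<noteq> x \<longrightarrow> l0norm N x < l0norm N z)"

(* Graph: adjacency matrix A with A i j = 1 iff i receives an edge from j *)
definition adjacency :: "nat \<Rightarrow> (nat \<Rightarrow> nat \<Rightarrow> real) \<Rightarrow> bool" where
  "adjacency N A \<longleftrightarrow> (\<forall>i<N. \<forall>j<N. A i j \<in> {0, 1}) \<and> (\<forall>i<N. A i i = 0)"

definition out_degree :: "nat \<Rightarrow> (nat \<Rightarrow> nat \<Rightarrow> real) \<Rightarrow> nat \<Rightarrow> nat" where
  "out_degree N A q = card {i. i < N \<and> A i q = 1}"

definition max_out_degree :: "nat \<Rightarrow> (nat \<Rightarrow> nat \<Rightarrow> real) \<Rightarrow> nat" where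
  "max_out_degree N A = Max ((\<lambda>q. out_degree N A q) ` {..<N})"

definition first_level :: "nat \<Rightarrow> (nat \<Rightarrow> nat \<Rightarrow> real) \<Rightarrow> nat \<Rightarrow> nat set" where
  "first_level N A q = {i. i < N \<and> A i q = 1}"

definition nds_step :: "nat \<Rightarrow> (nat \<Rightarrow> nat \<Rightarrow> real) \<Rightarrow> (nat \<Rightarrow> real \<Rightarrow> real)
      \<Rightarrow> (nat \<Rightarrow> nat \<Rightarrow> real \<Rightarrow> real \<Rightarrow> real) \<Rightarrow> (nat \<Rightarrow> real) \<Rightarrow> (nat \<Rightarrow> real)" where
  "nds_step N A f h x = (\<lambda>i. if i < N then f i (x i) + (\<Sum>j<N. A i j * h i j (x i) (x j)) else 0)"

definition nds_traj :: "nat \<Rightarrow> (nat \<Rightarrow> nat \<Rightarrow> real) \<Rightarrow> (nat \<Rightarrow> real \<Rightarrow> real)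
      \<Rightarrow> (nat \<Rightarrow> nat \<Rightarrow> real \<Rightarrow> real \<Rightarrow> real) \<Rightarrow> (nat \<Rightarrow> real) \<Rightarrow> nat \<Rightarrow> (nat \<Rightarrow> real)" where
  "nds_traj N A f h x0 t = (nds_step N A f h ^^ t) x0"

definition pinching_init :: "nat \<Rightarrow> real \<Rightarrow> (nat \<Rightarrow> real)" where
  "pinching_init q \<epsilon> = (\<lambda>i. if i = q then \<epsilon> else 0)"

definition assumption1 :: "nat \<Rightarrow> (nat \<Rightarrow> real \<Rightarrow> real) \<Rightarrow> bool" where
  "assumption1 N f \<longleftrightarrow> (\<forall>i<N. f i 0 = 0)"

definition assumption2 :: "nat \<Rightarrow> (nat \<Rightarrow> nat \<Rightarrow> real \<Rightarrow> real \<Rightarrow> real) \<Rightarrow> real \<Rightarrow> bool" where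
  "assumption2 N h \<delta> \<longleftrightarrow> \<delta> > 0 \<and>
     (\<forall>i<N. \<forall>j<N. h i j 0 0 = 0 \<and> (\<forall>v. 0 < \<bar>v\<bar> \<and> \<bar>v\<bar> < \<delta> \<longrightarrow> h i j 0 v \<noteq> 0))"

(* The N random P x N matrices phi_1..phi_N: entry (q,i,j) is (phi_q)_{ij},
   i.i.d. N(0, 1/P), i.e. standard deviation sqrt(1/P). *)
definition gauss_matrices :: "nat \<Rightarrow> nat \<Rightarrow> (nat \<times> nat \<times> nat \<Rightarrow> real) measure" where
  "gauss_matrices P N = PiM ({..<N} \<times> {..<P} \<times> {..<N})
      (\<lambda>_. density lborel (normal_density 0 (sqrt (1 / real P))))"

definition phi_of :: "(nat \<times> nat \<times> nat \<Rightarrow> real) \<Rightarrow> nat \<Rightarrow> (nat \<Rightarrow> nat \<Rightarrow> real)" where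
  "phi_of \<omega> q = (\<lambda>i j. \<omega> (q, i, j))"

end

theory Submission
  imports Defs "Jordan_Normal_Form.Determinant"
begin


lemma null_coord:
  fixes I :: "'i set" and \<mu> :: "real measure" and g :: "('i \<Rightarrow> real) \<Rightarrow> real"
  assumes ps: "prob_space \<mu>" and fin: "finite I" and kI: "k \<in> I"
    and ae: "\<And>c. AE y in \<mu>. y \<noteq> c"
    and sets_mu: "sets \<mu> = sets borel"
    and gm: "g \<in> borel_measurable (PiM I (\<lambda>_. \<mu>))"
    and gind: "\<And>w t. g (w(k := t)) = g w"
  shows "AE w in PiM I (\<lambda>_. \<mu>). w k \<noteq> g w"
proof -
  interpret ps: product_sigma_finite "\<lambda>_::'i. \<mu>"
    unfolding product_sigma_finite_def using prob_space_imp_sigma_finite[OF ps] by simp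
  define J where "J = I - {k}"
  have IJ: "I = insert k J" and kJ: "k \<notin> J" and finJ: "finite J" using kI fin by (auto simp: J_def)
  define S where "S = {w \<in> space (PiM I (\<lambda>_. \<mu>)). w k = g w}"
  have kmeas: "(\<lambda>w. w k) \<in> borel_measurable (PiM I (\<lambda>_. \<mu>))"
    using kI by (metis measurable_component_singleton measurable_cong_sets sets_mu sets_lborel refl)
  have Sm: "S \<in> sets (PiM I (\<lambda>_. \<mu>))"
    unfolding S_def using kmeas gm by measurable
  have "emeasure (PiM I (\<lambda>_. \<mu>)) S = (\<integral>\<^sup>+ w. indicator S w \<partial>PiM I (\<lambda>_. \<mu>))"
    using Sm by simp
  also have "\<dots> = (\<integral>\<^sup>+ x. \<integral>\<^sup>+ y. indicator S (x(k := y)) \<partial>\<mu> \<partial>PiM J (\<lambda>_. \<mu>))"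
    unfolding IJ using ps.product_nn_integral_insert[OF finJ kJ, of "indicator S"] Sm IJ by simp
  also have "\<dots> = (\<integral>\<^sup>+ x. 0 \<partial>PiM J (\<lambda>_. \<mu>))"
  proof (rule nn_integral_cong)
    fix x assume x: "x \<in> space (PiM J (\<lambda>_. \<mu>))"
    have "AE y in \<mu>. indicator S (x(k := y)) = (0::ennreal)"
      using ae[of "g (x(k := 0))"]
    proof eventually_elim
      case (elim y)
      have "g (x(k := y)) = g (x(k:=0))" by (metis fun_upd_upd gind)
      then show ?case using elim by (auto simp: S_def indicator_def)
    qed
    from nn_integral_cong_AE[OF this] show "(\<integral>\<^sup>+ y. indicator S (x(k := y)) \<partial>\<mu>) = 0"
      by simp
  qed
  also have "\<dots> = 0" by simp
  finally have "emeasure (PiM I (\<lambda>_. \<mu>)) S = 0" .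
  then show ?thesis
    using Sm by (intro AE_I[where N=S]) (auto simp: S_def)
qed


lemma gauss_facts:
  assumes "0 < P"
  shows "prob_space (density lborel (normal_density 0 (sqrt (1 / real P))))"
    and "\<And>c. AE y in density lborel (normal_density 0 (sqrt (1 / real P))). y \<noteq> c"
    and "sets (density lborel (normal_density 0 (sqrt (1 / real P)))) = sets borel"
proof -
  have s: "0 < sqrt (1 / real P)" using assms by simp
  show "prob_space (density lborel (normal_density 0 (sqrt (1 / real P))))"
    using prob_space_normal_density[OF s] .
  show "\<And>c. AE y in density lborel (normal_density 0 (sqrt (1 / real P))). y \<noteq> c"
    by (subst AE_density) (auto intro: AE_mp[OF AE_lborel_singleton])
  show "sets (density lborel (normal_density 0 (sqrt (1 / real P)))) = sets borel"
    by simp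
qed

definition subm :: "(nat \<times> nat \<times> nat \<Rightarrow> real) \<Rightarrow> nat \<Rightarrow> nat list \<Rightarrow> nat list \<Rightarrow> real mat" where
  "subm w q rs cs = Matrix.mat (length rs) (length cs) (\<lambda>(i,j). w (q, rs!i, cs!j))"

lemma det_meas:
  fixes e :: "'a \<Rightarrow> nat \<Rightarrow> nat \<Rightarrow> real"
  assumes "\<And>i j. i < n \<Longrightarrow> j < n \<Longrightarrow> (\<lambda>w. e w i j) \<in> borel_measurable M"
  shows "(\<lambda>w. Determinant.det (Matrix.mat n n (\<lambda>(i,j). e w i j))) \<in> borel_measurable M"
proof -
  have "(\<lambda>w. Determinant.det (Matrix.mat n n (\<lambda>(i,j). e w i j))) =
     (\<lambda>w. \<Sum> p \<in> {p. p permutes {0 ..< n}}. signof p * (\<Prod> i = 0 ..< n. e w i (p i)))"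
    by (rule ext, subst det_def'[of _ n]) auto
  also have "\<dots> \<in> borel_measurable M"
    apply (rule borel_measurable_sum)
    apply (rule borel_measurable_times)
     apply simp
    apply (rule borel_measurable_prod)
    apply (rule assms)
     apply simp
    using permutes_in_image by fastforce
  finally show ?thesis .
qed

lemma det_expand:
  fixes e :: "nat \<Rightarrow> nat \<Rightarrow> real"
  shows "Determinant.det (Matrix.mat (Suc m) (Suc m) (\<lambda>(i,j). e i j)) =
    e 0 0 * Determinant.det (Matrix.mat m m (\<lambda>(i,j). e (Suc i) (Suc j)))
    + Determinant.det (Matrix.mat (Suc m) (Suc m) (\<lambda>(i,j). if i = 0 \<and> j = 0 then 0 else e i j))"
proof -
  define A where "A = Matrix.mat (Suc m) (Suc m) (\<lambda>(i,j). e i j)"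
  define B where "B = Matrix.mat (Suc m) (Suc m) (\<lambda>(i,j). if i = 0 \<and> j = 0 then 0 else e i j)"
  have A: "A \<in> carrier_mat (Suc m) (Suc m)" and B: "B \<in> carrier_mat (Suc m) (Suc m)"
    by (auto simp: A_def B_def)
  have del: "mat_delete A i 0 = mat_delete B i 0" for i
    by (rule eq_matI) (auto simp: mat_delete_def A_def B_def)
  have del0: "mat_delete A 0 0 = Matrix.mat m m (\<lambda>(i,j). e (Suc i) (Suc j))"
    by (rule eq_matI) (auto simp: mat_delete_def A_def)
  have "Determinant.det A = (\<Sum>i<Suc m. A $$ (i,0) * cofactor A i 0)"
    using laplace_expansion_column[OF A, of 0] by simp
  also have "\<dots> = A $$ (0,0) * cofactor A 0 0 + (\<Sum>i<m. A $$ (Suc i,0) * cofactor A (Suc i) 0)"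
    by (subst sum.lessThan_Suc_shift) simp
  also have "(\<Sum>i<m. A $$ (Suc i,0) * cofactor A (Suc i) 0) = (\<Sum>i<m. B $$ (Suc i,0) * cofactor B (Suc i) 0)"
  proof (rule sum.cong)
    fix i assume "i \<in> {..<m}"
    then have "A $$ (Suc i,0) = B $$ (Suc i,0)" by (simp add: A_def B_def)
    moreover have "cofactor A (Suc i) 0 = cofactor B (Suc i) 0" by (simp add: cofactor_def del)
    ultimately show "A $$ (Suc i,0) * cofactor A (Suc i) 0 = B $$ (Suc i,0) * cofactor B (Suc i) 0" by simp
  qed simp
  also have "\<dots> = B $$ (0,0) * cofactor B 0 0 + (\<Sum>i<m. B $$ (Suc i,0) * cofactor B (Suc i) 0)"
    by (simp add: B_def)
  also have "\<dots> = (\<Sum>i<Suc m. B $$ (i,0) * cofactor B i 0)"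
    by (subst sum.lessThan_Suc_shift) simp
  also have "\<dots> = Determinant.det B"
    using laplace_expansion_column[OF B, of 0] by simp
  finally show ?thesis unfolding A_def[symmetric] B_def[symmetric]
    using del0 by (simp add: cofactor_def A_def)
qed


lemma coord_meas:
  assumes "k \<in> {..<N} \<times> {..<P} \<times> {..<N}"
  shows "(\<lambda>w. w k) \<in> borel_measurable (gauss_matrices P N)"
proof -
  let ?I = "{..<N} \<times> {..<P} \<times> {..<N}"
  let ?m = "density lborel (normal_density 0 (sqrt (1 / real P)))"
  have 1: "(\<lambda>w. w k) \<in> measurable (PiM ?I (\<lambda>_. ?m)) ?m"
    by (rule measurable_component_singleton[OF assms])
  have 2: "measurable (PiM ?I (\<lambda>_. ?m)) ?m = borel_measurable (PiM ?I (\<lambda>_. ?m))"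
    by (rule measurable_cong_sets) simp_all
  show ?thesis using 1 2 by (simp add: gauss_matrices_def)
qed

lemma subm_Nil: "Determinant.det (subm w q [] []) = 1"
proof -
  have "subm w q [] [] = 1\<^sub>m 0" by (rule eq_matI) (auto simp: subm_def)
  then show ?thesis by simp
qed



lemma det_AE:
  assumes q: "q < N"
  shows "length rs = n \<Longrightarrow> length cs = n \<Longrightarrow> distinct rs \<Longrightarrow> distinct cs \<Longrightarrow>
    set rs \<subseteq> {..<P} \<Longrightarrow> set cs \<subseteq> {..<N} \<Longrightarrow>
    AE w in gauss_matrices P N. Determinant.det (subm w q rs cs) \<noteq> 0"
proof (induction n arbitrary: rs cs)
  case 0
  then show ?case by (simp add: subm_Nil)
next
  case (Suc n)
  obtain r rs' where rs: "rs = r # rs'" using Suc.prems(1) by (cases rs) auto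
  obtain c cs' where cs: "cs = c # cs'" using Suc.prems(2) by (cases cs) auto
  have lrs': "length rs' = n" and lcs': "length cs' = n" using Suc.prems rs cs by auto
  have rnot: "r \<notin> set rs'" and cnot: "c \<notin> set cs'" using Suc.prems rs cs by auto
  have rP: "r < P" and cN: "c < N" using Suc.prems rs cs by auto
  then have P0: "0 < P" by simp
  define I where "I = {..<N} \<times> {..<P} \<times> {..<N}"
  define k where "k = (q, r, c)"
  have kI: "k \<in> I" using q rP cN by (simp add: I_def k_def)
  define D where "D w = Determinant.det (subm w q rs' cs')" for w
  define Bf where "Bf w = Determinant.det (Matrix.mat (Suc n) (Suc n)
      (\<lambda>(i,j). if i = 0 \<and> j = 0 then (0::real) else w (q, rs!i, cs!j)))" for w
  define g where "g w = - Bf w / D w" for w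
  have IH: "AE w in gauss_matrices P N. D w \<noteq> 0"
    unfolding D_def using Suc.IH[of rs' cs'] Suc.prems rs cs by auto
  have inI: "(q, rs!i, cs!j) \<in> I" if "i < Suc n" "j < Suc n" for i j
  proof -
    have a: "rs!i \<in> set rs" "cs!j \<in> set cs" using that Suc.prems(1,2) by auto
    have "rs!i < P" using a(1) Suc.prems(5) by auto
    moreover have "cs!j < N" using a(2) Suc.prems(6) by auto
    ultimately show ?thesis using q by (simp add: I_def)
  qed
  have inI': "(q, rs'!i, cs'!j) \<in> I" if "i < n" "j < n" for i j
    using inI[of "Suc i" "Suc j"] that rs cs by simp
  have ne: "(q, rs!i, cs!j) \<noteq> k" if ij: "i < Suc n" "j < Suc n" and nz: "\<not> (i = 0 \<and> j = 0)" for i j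
  proof (cases i)
    case 0
    then obtain j' where j': "j = Suc j'" using nz by (cases j) auto
    then have "cs!j \<in> set cs'" using ij cs lcs' by auto
    then show ?thesis using cnot by (auto simp: k_def)
  next
    case (Suc i')
    then have "rs!i \<in> set rs'" using ij rs lrs' by auto
    then show ?thesis using rnot by (auto simp: k_def)
  qed
  have ne': "(q, rs'!i, cs'!j) \<noteq> k" if "i < n" "j < n" for i j
    using nth_mem[of i rs'] that lrs' rnot by (auto simp: k_def)
  have Dind: "D (w(k := t)) = D w" for w t
  proof -
    have "subm (w(k := t)) q rs' cs' = subm w q rs' cs'"
      by (rule eq_matI) (auto simp: subm_def ne' lrs' lcs')
    then show ?thesis by (simp add: D_def)
  qed
  have Bind: "Bf (w(k := t)) = Bf w" for w t
  proof -
    have "Matrix.mat (Suc n) (Suc n) (\<lambda>(i,j). if i = 0 \<and> j = 0 then 0 else (w(k:=t)) (q, rs!i, cs!j))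
        = Matrix.mat (Suc n) (Suc n) (\<lambda>(i,j). if i = 0 \<and> j = 0 then 0 else w (q, rs!i, cs!j))"
      by (rule eq_matI) (auto simp: ne)
    then show ?thesis by (simp add: Bf_def)
  qed
  have gind: "g (w(k := t)) = g w" for w t by (simp add: g_def Dind Bind)
  have Dm: "D \<in> borel_measurable (gauss_matrices P N)"
  proof -
    have "D = (\<lambda>w. Determinant.det (Matrix.mat n n (\<lambda>(i,j). w (q, rs'!i, cs'!j))))"
      by (rule ext) (simp add: D_def subm_def lrs' lcs')
    also have "\<dots> \<in> borel_measurable (gauss_matrices P N)"
      by (rule det_meas) (rule coord_meas, use inI' in \<open>auto simp: I_def\<close>)
    finally show ?thesis .
  qed
  have Bm: "Bf \<in> borel_measurable (gauss_matrices P N)"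
    unfolding Bf_def
  proof (rule det_meas)
    fix i j assume ij: "i < Suc n" "j < Suc n"
    show "(\<lambda>w. if i = 0 \<and> j = 0 then 0 else w (q, rs!i, cs!j)) \<in> borel_measurable (gauss_matrices P N)"
      using coord_meas[of "(q, rs!i, cs!j)" N P] inI[OF ij] by (auto simp: I_def)
  qed
  have gm: "g \<in> borel_measurable (PiM I (\<lambda>_. density lborel (normal_density 0 (sqrt (1 / real P)))))"
    using Dm Bm unfolding g_def gauss_matrices_def I_def by measurable
  have nc: "AE w in gauss_matrices P N. w k \<noteq> g w"
    unfolding gauss_matrices_def I_def[symmetric]
    by (rule null_coord[OF gauss_facts(1)[OF P0] _ kI gauss_facts(2)[OF P0] gauss_facts(3)[OF P0] gm gind])
      (simp add: I_def)
  have exp: "Determinant.det (subm w q rs cs) = w k * D w + Bf w" for w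
  proof -
    have "subm w q rs cs = Matrix.mat (Suc n) (Suc n) (\<lambda>(i,j). (\<lambda>i j. w (q, rs!i, cs!j)) i j)"
      using Suc.prems by (simp add: subm_def)
    moreover have "Matrix.mat n n (\<lambda>(i,j). (\<lambda>i j. w (q, rs!i, cs!j)) (Suc i) (Suc j)) = subm w q rs' cs'"
      by (simp add: subm_def rs cs lrs' lcs')
    ultimately show ?thesis
      using det_expand[of n "\<lambda>i j. w (q, rs!i, cs!j)"]
      by (simp add: D_def Bf_def k_def rs cs)
  qed
  show ?case
    using IH nc
  proof eventually_elim
    case (elim w)
    show ?case
    proof
      assume "Determinant.det (subm w q rs cs) = 0"
      then have "w k * D w + Bf w = 0" by (simp add: exp)
      then have "w k = g w" using elim(1) by (simp add: g_def field_simps)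
      then show False using elim(2) by simp
    qed
  qed
qed



lemma spark_lower:
  fixes phi :: "nat \<Rightarrow> nat \<Rightarrow> real"
  assumes H: "\<And>cs. length cs = P \<Longrightarrow> distinct cs \<Longrightarrow> set cs \<subseteq> {..<N} \<Longrightarrow>
      Determinant.det (Matrix.mat P P (\<lambda>(i,j). phi i (cs!j))) \<noteq> 0"
    and PN: "P \<le> N"
    and xv: "is_vec N x" and xn: "x \<noteq> (\<lambda>_. 0)" and xk: "mat_vec P N phi x = (\<lambda>_. 0)"
  shows "P + 1 \<le> l0norm N x"
proof (rule ccontr)
  assume "\<not> P + 1 \<le> l0norm N x"
  then have cs: "card (supp N x) \<le> P" by (simp add: l0norm_def)
  have ss: "supp N x \<subseteq> {..<N}" by (auto simp: supp_def)
  obtain T where T: "supp N x \<subseteq> T" "T \<subseteq> {..<N}" "card T = P"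
    using exists_subset_between[OF cs _ ss] PN by auto
  have finT: "finite T" using T(2) finite_subset by blast
  define cs where "cs = sorted_list_of_set T"
  have csd: "distinct cs" "set cs = T" "length cs = P"
    using finT T(3) by (auto simp: cs_def)
  define M where "M = Matrix.mat P P (\<lambda>(i,j). phi i (cs!j))"
  have Mc: "M \<in> carrier_mat P P" by (simp add: M_def)
  define v where "v = vec P (\<lambda>j. x (cs!j))"
  have vc: "v \<in> carrier_vec P" by (simp add: v_def)
  obtain j0 where j0: "x j0 \<noteq> 0" using xn by auto
  have "j0 < N" using xv j0 unfolding is_vec_def by (meson not_le)
  then have "j0 \<in> set cs" using j0 T(1) csd(2) by (auto simp: supp_def)
  then obtain k where k: "k < P" "cs!k = j0" using csd(3) by (auto simp: in_set_conv_nth)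
  have vn: "v \<noteq> 0\<^sub>v P"
  proof
    assume "v = 0\<^sub>v P"
    then have "v $ k = 0" using k by simp
    then show False using k j0 by (simp add: v_def)
  qed
  have sumeq: "(\<Sum>k\<in>{0..<P}. f (cs!k)) = (\<Sum>j\<in>T. f j)" for f :: "nat \<Rightarrow> real"
  proof -
    have "(\<Sum>j\<in>T. f j) = sum_list (map f cs)"
      using csd by (simp add: sum_list_distinct_conv_sum_set)
    also have "\<dots> = (\<Sum>k = 0..<length cs. map f cs ! k)" by (simp add: sum_list_sum_nth)
    also have "\<dots> = (\<Sum>k\<in>{0..<P}. f (cs!k))" using csd(3) by simp
    finally show ?thesis by simp
  qed
  have Mv: "M *\<^sub>v v = 0\<^sub>v P"
  proof (rule eq_vecI)
    fix i assume i: "i < dim_vec (0\<^sub>v P :: real vec)"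
    then have iP: "i < P" by simp
    have "(M *\<^sub>v v) $ i = (\<Sum>k\<in>{0..<P}. phi i (cs!k) * x (cs!k))"
      using iP by (simp add: M_def v_def scalar_prod_def)
    also have "\<dots> = (\<Sum>j\<in>T. phi i j * x j)" by (rule sumeq)
    also have "\<dots> = (\<Sum>j<N. phi i j * x j)"
    proof (rule sum.mono_neutral_left)
      show "\<forall>j\<in>{..<N} - T. phi i j * x j = 0" using T(1) by (auto simp: supp_def)
    qed (use T(2) in auto)
    also have "\<dots> = mat_vec P N phi x i" using iP by (simp add: mat_vec_def)
    also have "\<dots> = 0" using xk by simp
    finally show "(M *\<^sub>v v) $ i = 0\<^sub>v P $ i" using iP by simp
  qed (simp add: M_def)
  have "Determinant.det M = 0"
    using det_0_iff_vec_prod_zero[OF Mc] vc vn Mv by blast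
  then show False using H[OF csd(3) csd(1)] T(2) csd(2) by (simp add: M_def)
qed

lemma spark_upper:
  fixes phi :: "nat \<Rightarrow> nat \<Rightarrow> real"
  assumes PN: "P < N"
  shows "\<exists>x. is_vec N x \<and> x \<noteq> (\<lambda>_. 0) \<and> mat_vec P N phi x = (\<lambda>_. 0) \<and> l0norm N x \<le> P + 1"
proof -
  define B where "B = Matrix.mat (Suc P) (Suc P) (\<lambda>(i,j). if i < P then phi i j else 0)"
  have Bc: "B \<in> carrier_mat (Suc P) (Suc P)" by (simp add: B_def)
  have "Determinant.det B = 0"
  proof -
    have "(\<Prod>i = 0..<Suc P. B $$ (i, p i)) = 0" if p: "p permutes {0..<Suc P}" for p
    proof (rule prod_zero)
      have "p P < Suc P" using permutes_in_image[OF p] by simp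
      then show "\<exists>a\<in>{0..<Suc P}. B $$ (a, p a) = 0" by (intro bexI[of _ P]) (auto simp: B_def)
    qed simp
    note pz = this
    show ?thesis unfolding det_def'[OF Bc]
    proof (rule sum.neutral, rule ballI)
      fix p assume "p \<in> {p. p permutes {0..<Suc P}}"
      then have "(\<Prod>i = 0..<Suc P. B $$ (i, p i)) = 0" using pz by simp
      then show "signof p * (\<Prod>i = 0..<Suc P. B $$ (i, p i)) = 0" by (metis mult_zero_right)
    qed

  qed
  then obtain v where v: "v \<in> carrier_vec (Suc P)" "v \<noteq> 0\<^sub>v (Suc P)" "B *\<^sub>v v = 0\<^sub>v (Suc P)"
    using det_0_iff_vec_prod_zero[OF Bc] by blast
  define x where "x = (\<lambda>j. if j < Suc P then v $ j else 0)"
  have xv: "is_vec N x" using PN by (auto simp: is_vec_def x_def)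
  have xn: "x \<noteq> (\<lambda>_. 0)"
  proof
    assume x0: "x = (\<lambda>_. 0)"
    have "v = 0\<^sub>v (Suc P)"
    proof (rule eq_vecI)
      fix i assume "i < dim_vec (0\<^sub>v (Suc P) :: real vec)"
      then have "i < Suc P" by simp
      then show "v $ i = 0\<^sub>v (Suc P) $ i" using fun_cong[OF x0, of i] by (simp add: x_def)
    qed (use v(1) in simp)
    then show False using v(2) by simp
  qed
  have xk: "mat_vec P N phi x = (\<lambda>_. 0)"
  proof
    fix i
    show "mat_vec P N phi x i = 0"
    proof (cases "i < P")
      case True
      have "(\<Sum>j<N. phi i j * x j) = (\<Sum>j<Suc P. phi i j * x j)"
        by (rule sum.mono_neutral_right) (use PN in \<open>auto simp: x_def\<close>)
      also have "\<dots> = (B *\<^sub>v v) $ i"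
        using True v(1) by (simp add: B_def x_def scalar_prod_def atLeast0LessThan)
      also have "\<dots> = 0" using v(3) True by simp
      finally show ?thesis using True by (simp add: mat_vec_def)
    qed (simp add: mat_vec_def)
  qed
  have "supp N x \<subseteq> {..<Suc P}" by (auto simp: supp_def x_def split: if_splits)
  then have "l0norm N x \<le> P + 1" unfolding l0norm_def using card_mono[of "{..<Suc P}"] by fastforce
  with xv xn xk show ?thesis by blast
qed



lemma full_spark_of:
  fixes phi :: "nat \<Rightarrow> nat \<Rightarrow> real"
  assumes PN: "P < N"
    and L: "\<And>x. is_vec N x \<Longrightarrow> x \<noteq> (\<lambda>_. 0) \<Longrightarrow> mat_vec P N phi x = (\<lambda>_. 0) \<Longrightarrow> P + 1 \<le> l0norm N x"
  shows "full_spark P N phi"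
proof -
  obtain x0 where x0: "is_vec N x0" "x0 \<noteq> (\<lambda>_. 0)" "mat_vec P N phi x0 = (\<lambda>_. 0)" "l0norm N x0 \<le> P + 1"
    using spark_upper[OF PN, of phi] by blast
  have eqn: "l0norm N x0 = P + 1" using L[OF x0(1-3)] x0(4) by simp
  have mem: "P + 1 \<in> {l0norm N x | x. is_vec N x \<and> x \<noteq> (\<lambda>_. 0) \<and> mat_vec P N phi x = (\<lambda>_. 0)}"
    by (rule CollectI, rule exI[of _ x0]) (use x0 eqn in simp)
  have lb: "\<And>y. y \<in> {l0norm N x | x. is_vec N x \<and> x \<noteq> (\<lambda>_. 0) \<and> mat_vec P N phi x = (\<lambda>_. 0)} \<Longrightarrow> P + 1 \<le> y"
    using L by blast
  show ?thesis unfolding full_spark_def spark_def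
    by (rule cInf_eq_minimum[OF mem lb])
qed

lemma part2:
  fixes phi :: "nat \<Rightarrow> nat \<Rightarrow> real"
  assumes L: "\<And>x. is_vec N x \<Longrightarrow> x \<noteq> (\<lambda>_. 0) \<Longrightarrow> mat_vec P N phi x = (\<lambda>_. 0) \<Longrightarrow> P + 1 \<le> l0norm N x"
    and adj: "adjacency N A" and a1: "assumption1 N f" and a2: "assumption2 N h \<delta>"
    and PD: "real P > 2 * real (max_out_degree N A) + 1"
    and q: "q < N" and e1: "0 < \<bar>\<epsilon>\<bar>" and e2: "\<bar>\<epsilon>\<bar> < \<delta>"
  shows "let x1 = nds_traj N A f h (pinching_init q \<epsilon>) 1 in
           l0_unique_solution P N phi (mat_vec P N phi x1) x1 \<and> supp N x1 - {q} = first_level N A q"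
proof -
  define x1 where "x1 = nds_traj N A f h (pinching_init q \<epsilon>) 1"
  have x1def: "x1 i = (if i < N then f i (pinching_init q \<epsilon> i) +
      (\<Sum>j<N. A i j * h i j (pinching_init q \<epsilon> i) (pinching_init q \<epsilon> j)) else 0)" for i
    by (simp add: x1_def nds_traj_def nds_step_def)
  have hx: "x1 i = A i q * h i q 0 \<epsilon>" if i: "i < N" "i \<noteq> q" for i
  proof -
    have "(\<Sum>j<N. A i j * h i j (pinching_init q \<epsilon> i) (pinching_init q \<epsilon> j))
        = (\<Sum>j<N. if j = q then A i q * h i q 0 \<epsilon> else 0)"
      by (rule sum.cong) (use i a2 in \<open>auto simp: pinching_init_def assumption2_def\<close>)
    also have "\<dots> = A i q * h i q 0 \<epsilon>" using q by simp
    finally show ?thesis using i a1 by (simp add: x1def pinching_init_def assumption1_def)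
  qed
  have hnz: "h i q 0 \<epsilon> \<noteq> 0" if "i < N" for i
    using a2 that q e1 e2 by (auto simp: assumption2_def)
  have nz: "x1 i \<noteq> 0 \<longleftrightarrow> A i q = 1" if "i < N" "i \<noteq> q" for i
  proof -
    have "A i q \<in> {0,1}" using adj that q by (auto simp: adjacency_def)
    then show ?thesis using hx[OF that] hnz[OF that(1)] by auto
  qed
  have Aqq: "A q q = 0" using adj q by (auto simp: adjacency_def)
  have s1: "supp N x1 - {q} = first_level N A q"
  proof -
    have "i \<in> supp N x1 - {q} \<longleftrightarrow> i \<in> first_level N A q" for i
    proof (cases "i < N \<and> i \<noteq> q")
      case True then show ?thesis using nz[of i] by (auto simp: supp_def first_level_def)
    next
      case False then show ?thesis using Aqq by (auto simp: supp_def first_level_def)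
    qed
    then show ?thesis by blast
  qed
  have xv: "is_vec N x1" by (simp add: is_vec_def x1def)
  have fin: "finite (first_level N A q)" by (auto simp: first_level_def)
  have suppsub: "supp N x1 \<subseteq> insert q (first_level N A q)" using s1 by blast
  define D where "D = max_out_degree N A"
  have "out_degree N A q \<le> D"
    unfolding D_def max_out_degree_def using q by (intro Max_ge) auto
  then have cfl: "card (first_level N A q) \<le> D" by (simp add: out_degree_def first_level_def)
  have l0x: "l0norm N x1 \<le> D + 1"
  proof -
    have "l0norm N x1 \<le> card (insert q (first_level N A q))"
      unfolding l0norm_def using suppsub fin by (intro card_mono) auto
    also have "\<dots> \<le> card (first_level N A q) + 1" using fin by (simp add: card_insert_if)
    finally show ?thesis using cfl by simp
  qed
  have PD': "2 * D + 1 < P"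
  proof -
    have "real (2 * D + 1) < real P" using PD by (simp add: D_def)
    then show ?thesis by (simp only: of_nat_less_iff)
  qed
  have uniq: "l0norm N x1 < l0norm N z" if z: "is_vec N z" "mat_vec P N phi z = mat_vec P N phi x1" "z \<noteq> x1" for z
  proof (rule ccontr)
    assume "\<not> l0norm N x1 < l0norm N z"
    then have zle: "l0norm N z \<le> l0norm N x1" by simp
    define w where "w = (\<lambda>j. z j - x1 j)"
    have wv: "is_vec N w" using z(1) xv by (simp add: is_vec_def w_def)
    have wn: "w \<noteq> (\<lambda>_. 0)"
    proof
      assume "w = (\<lambda>_. 0)"
      then have "z = x1" by (auto simp: w_def fun_eq_iff)
      then show False using z(3) by simp
    qed
    have wk: "mat_vec P N phi w = (\<lambda>_. 0)"
    proof
      fix i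
      have "mat_vec P N phi w i = mat_vec P N phi z i - mat_vec P N phi x1 i"
        by (simp add: mat_vec_def w_def right_diff_distrib sum_subtractf)
      then show "mat_vec P N phi w i = 0" using z(2) by simp
    qed
    have "supp N w \<subseteq> supp N z \<union> supp N x1" by (auto simp: supp_def w_def)
    then have "l0norm N w \<le> card (supp N z \<union> supp N x1)"
      unfolding l0norm_def by (intro card_mono) (auto simp: supp_def)
    also have "\<dots> \<le> l0norm N z + l0norm N x1" unfolding l0norm_def by (rule card_Un_le)
    finally have "l0norm N w \<le> 2 * D + 2" using zle l0x by simp
    moreover have "P + 1 \<le> l0norm N w" using L[OF wv wn wk] .
    ultimately show False using PD' by simp
  qed
  have "l0_unique_solution P N phi (mat_vec P N phi x1) x1"
    unfolding l0_unique_solution_def using xv uniq by blast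
  then show ?thesis using s1 unfolding x1_def[symmetric] Let_def by simp
qed

theorem mainTheorem2:
  fixes P N :: nat
  assumes "P < N"
  shows "(AE \<omega> in gauss_matrices P N. \<forall>q<N. full_spark P N (phi_of \<omega> q))
    \<and> (\<forall>(A :: nat \<Rightarrow> nat \<Rightarrow> real) (f :: nat \<Rightarrow> real \<Rightarrow> real)
          (h :: nat \<Rightarrow> nat \<Rightarrow> real \<Rightarrow> real \<Rightarrow> real) (\<delta> :: real).
         adjacency N A \<and> assumption1 N f \<and> assumption2 N h \<delta>
         \<and> real P > 2 * real (max_out_degree N A) + 1 \<longrightarrow>
         (AE \<omega> in gauss_matrices P N.
            \<forall>q<N. \<forall>\<epsilon>::real. 0 < \<bar>\<epsilon>\<bar> \<and> \<bar>\<epsilon>\<bar> < \<delta> \<longrightarrow>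
              (let x1 = nds_traj N A f h (pinching_init q \<epsilon>) 1 in
                 l0_unique_solution P N (phi_of \<omega> q) (mat_vec P N (phi_of \<omega> q) x1) x1
                 \<and> supp N x1 - {q} = first_level N A q)))"
proof -
  define C where "C q cs \<longleftrightarrow> q < N \<and> length cs = P \<and> distinct cs \<and> set cs \<subseteq> {..<N}" for q and cs :: "nat list"
  have each: "AE w in gauss_matrices P N. C q cs \<longrightarrow> Determinant.det (subm w q [0..<P] cs) \<noteq> 0" for q cs
  proof (cases "C q cs")
    case True
    then have "AE w in gauss_matrices P N. Determinant.det (subm w q [0..<P] cs) \<noteq> 0"
      using det_AE[where q=q and N=N and rs="[0..<P]" and n=P and cs=cs and P=P] by (auto simp: C_def atLeast0LessThan)
    then show ?thesis by (rule AE_mp) (intro AE_I2 impI)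
  qed simp
  have allae: "AE w in gauss_matrices P N. \<forall>q cs. C q cs \<longrightarrow> Determinant.det (subm w q [0..<P] cs) \<noteq> 0"
    using each by (simp add: AE_all_countable)
  have Lw: "P + 1 \<le> l0norm N x"
    if w: "\<forall>q cs. C q cs \<longrightarrow> Determinant.det (subm w q [0..<P] cs) \<noteq> 0" and q: "q < N"
      and x: "is_vec N x" "x \<noteq> (\<lambda>_. 0)" "mat_vec P N (phi_of w q) x = (\<lambda>_. 0)" for w q x
  proof (rule spark_lower[OF _ _ x])
    fix cs :: "nat list" assume cs: "length cs = P" "distinct cs" "set cs \<subseteq> {..<N}"
    have "subm w q [0..<P] cs = Matrix.mat P P (\<lambda>(i,j). phi_of w q i (cs!j))"
      by (rule eq_matI) (auto simp: subm_def phi_of_def cs(1))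
    moreover have "Determinant.det (subm w q [0..<P] cs) \<noteq> 0" using w q cs unfolding C_def by blast
    ultimately show "Determinant.det (Matrix.mat P P (\<lambda>(i,j). phi_of w q i (cs!j))) \<noteq> 0"
      by simp
  qed (use assms in simp)
  show ?thesis
  proof (intro conjI allI impI)
    show "AE w in gauss_matrices P N. \<forall>q<N. full_spark P N (phi_of w q)"
      using allae by eventually_elim (use Lw assms in \<open>blast intro: full_spark_of\<close>)
  next
    fix A :: "nat \<Rightarrow> nat \<Rightarrow> real" and f :: "nat \<Rightarrow> real \<Rightarrow> real"
      and h :: "nat \<Rightarrow> nat \<Rightarrow> real \<Rightarrow> real \<Rightarrow> real" and \<delta> :: real
    assume H: "adjacency N A \<and> assumption1 N f \<and> assumption2 N h \<delta> \<and> real P > 2 * real (max_out_degree N A) + 1"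
    show "AE w in gauss_matrices P N.
            \<forall>q<N. \<forall>\<epsilon>::real. 0 < \<bar>\<epsilon>\<bar> \<and> \<bar>\<epsilon>\<bar> < \<delta> \<longrightarrow>
              (let x1 = nds_traj N A f h (pinching_init q \<epsilon>) 1 in
                 l0_unique_solution P N (phi_of w q) (mat_vec P N (phi_of w q) x1) x1
                 \<and> supp N x1 - {q} = first_level N A q)"
      using allae
    proof eventually_elim
      case (elim w)
      show ?case
      proof (intro allI impI)
        fix q \<epsilon> assume q: "q < N" and e: "0 < \<bar>\<epsilon>::real\<bar> \<and> \<bar>\<epsilon>\<bar> < \<delta>"
        show "let x1 = nds_traj N A f h (pinching_init q \<epsilon>) 1 in
                 l0_unique_solution P N (phi_of w q) (mat_vec P N (phi_of w q) x1) x1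
                 \<and> supp N x1 - {q} = first_level N A q"
          using part2[of N P "phi_of w q" A f h \<delta> q \<epsilon>] Lw[OF elim q] H q e by blast
      qed
    qed
  qed
qed


end
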